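(* The assignment $\mathcal{P}$ described below is an algebra over the operad $\mathcal{W}$ of black boxes and wiring diagrams; that is: (1) (identity law) for every black box $Z$ and every $f\in\mathcal{P}(Z)$, $\mathcal{P}(\mathrm{id}_Z)(f)=f$; (2) (composition law) for every wiring diagram $\psi\colon (Y(i))_{i\in n}\to Z$, every family of wiring diagrams $\phi_i\colon (X_j)_{j\in m_i}\to Y(i)$ ($i\in n$), and every family of propagators $f_j\in\mathcal{P}(X_j)$ ($j\in m=\coprod_i m_i$), one has $$\mathcal{P}\big(\psi\circ(\phi_i)_{i\in n}\big)\big((f_j)_{j\in m}\big)=\mathcal{P}(\psi)\Big(\big(\mathcal{P}(\phi_i)((f_j)_{j\in m_i})\big)_{i\in n}\Big).$$
   Context: Wiring diagrams. A black box $X=(\mathrm{in}(X),\mathrm{out}(X),{\tt vset})$: finite sets of input and output wires with ${\tt vset}$ assigning a pointed set to each wire. For a family $Y=(Y(i))_{i\in n}$ put $\mathrm{in}(Y)=\coprod_i\mathrm{in}(Y(i))$, $\mathrm{out}(Y)=\coprod_i\mathrm{out}(Y(i))$. A wiring diagram $\psi\colon Y\to Z$ consists of a finite set $\mathrm{Del}(\psi)$ of delay nodes with pointed sets ${\tt vset}(d)$ and a supplier assignment $s_\psi\colon\mathrm{Dem}(\psi)=\mathrm{out}(Z)\amalg\mathrm{in}(Y)\amalg\mathrm{Del}(\psi)\to\mathrm{Sup}(\psi)=\mathrm{in}(Z)\amalg\mathrm{out}(Y)\amalg\mathrm{Del}(\psi)$ preserving ${\tt vset}$ with $s_\psi(\mathrm{out}(Z))\subseteq\mathrm{out}(Y)\amalg\mathrm{Del}(\psi)$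 (identified up to bijection of delay nodes). $\mathrm{id}_Z$ has no delay nodes and identity supplier assignment. Composition: for $\psi\colon Y\to Z$ and $\phi_i\colon X_i\to Y(i)$, let $\phi=\bigotimes\phi_i\colon X\to Y$ be the disjoint union; $\omega=\psi\circ\phi$ has $\mathrm{Del}(\omega)=\mathrm{Del}(\phi)\amalg\mathrm{Del}(\psi)$ and $s_\omega=h\circ s_\phi|_{\mathrm{in}(X)\amalg\mathrm{Del}(\phi)}\amalg f\circ s_\psi|_{\mathrm{out}(Z)\amalg\mathrm{Del}(\psi)}$ with $f=\mathrm{id}_{\mathrm{in}(Z)}\amalg s_\phi|_{\mathrm{out}(Y)}\amalg\mathrm{id}_{\mathrm{Del}(\psi)}\colon\mathrm{Sup}(\psi)\to\mathrm{Sup}(\omega)$, $h=(f\circ s_\psi)|_{\mathrm{in}(Y)}\amalg\mathrm{id}_{\mathrm{out}(X)}\amalg\mathrm{id}_{\mathrm{Del}(\phi)}\colon\mathrm{Sup}(\phi)\to\mathrm{Sup}(\omega)$, where $\mathrm{Sup}(\omega)=\mathrm{in}(Z)\amalg\mathrm{out}(X)\amalg\mathrm{Del}(\omega)$. Lists and propagators. $\mathrm{List}(S)=\coprod_{t\in\mathbb{N}}S^t$; $\partial\ell$ drops the last entry of a nonempty list; $[\,]$ is the empty list. A list of tuples in $\prod_k S_k$ is identified with a tuple of lists of equal length ("zipping"). An $n$-historical propagator $f\colon\mathrm{List}(R)\to\mathrm{List}(S)$ satisfies $|f(\ell)|=|\ell|+n$ and $\partial f(\ell)=f(\partial\ell)$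 for $|\ell|\ge1$; $\mathrm{Hist}^n(R,S)$ is their set. For a set $I$ of wires put ${\tt vset}_I=\prod_{i\in I}{\tt vset}(i)$ (a one-point set if $I=\emptyset$), and write $\overline{I}=\mathrm{List}({\tt vset}_I)$. The algebra $\mathcal{P}$. On objects, $\mathcal{P}(Z)=\mathrm{Hist}^1({\tt vset}_{\mathrm{in}(Z)},{\tt vset}_{\mathrm{out}(Z)})$. On a wiring diagram $\psi\colon (Y(i))_{i\in n}\to Z$ and $g_i\in\mathcal{P}(Y(i))$: let $g=\prod_i g_i\colon\overline{\mathrm{in}(Y)}\to\overline{\mathrm{out}(Y)}$ (applied componentwise after unzipping). Let $\mathrm{inDem}(\psi)=\mathrm{in}(Y)\amalg\mathrm{Del}(\psi)$ and $\mathrm{inSup}(\psi)=\mathrm{out}(Y)\amalg\mathrm{Del}(\psi)$. Define $S_\psi=\mathrm{List}(\pi_{s_\psi})\colon\overline{\mathrm{Sup}(\psi)}\to\overline{\mathrm{Dem}(\psi)}$ where $\pi_{s_\psi}((x_a)_{a\in\mathrm{Sup}})=(x_{s_\psi(d)})_{d\in\mathrm{Dem}}$; $S'_\psi=\pi_{\overline{\mathrm{inDem}(\psi)}}\circ S_\psi\colon\overline{\mathrm{Sup}(\psi)}\to\overline{\mathrm{inDem}(\psi)}$; $S''_\psi=\mathrm{List}(\pi_{s_\psi|_{\mathrm{out}(Z)}})\colon\overline{\mathrm{inSup}(\psi)}\to\overline{\mathrm{out}(Z)}$. Let $\delta^1_\psi\colon\overline{\mathrm{Del}(\psi)}\to\overline{\mathrm{Del}(\psi)}$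 be the 1-moment delay, prepending the basepoint: $\delta^1(\ell)=[*,\ell(1),\dots,\ell(t)]$. Set $E_{\psi,g}=g\times\delta^1_\psi\colon\overline{\mathrm{inDem}(\psi)}\to\overline{\mathrm{inSup}(\psi)}$, and define $C_{\psi,g}\colon\overline{\mathrm{in}(Z)}\to\overline{\mathrm{Sup}(\psi)}$ recursively by $C_{\psi,g}([\,])=[\,]$ and, for $|\ell|\geq1$, $C_{\psi,g}(\ell)=\big(\ell,\;E_{\psi,g}\circ S'_\psi\circ C_{\psi,g}(\partial\ell)\big)$ (a pair of equal-length lists in $\overline{\mathrm{in}(Z)}\times\overline{\mathrm{inSup}(\psi)}=\overline{\mathrm{Sup}(\psi)}$). Then $\mathcal{P}(\psi)(g_1,\dots,g_n)=S''_\psi\circ E_{\psi,g}\circ S'_\psi\circ C_{\psi,g}\in\mathcal{P}(Z)$. *)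

theory Defs
  imports "HOL-Library.FuncSet"
begin

text \<open>A pointed set is a pair (carrier, basepoint).  All values live in one ambient
  type 'v; wires live in an ambient type 'w.\<close>

type_synonym 'v pset = "'v set \<times> 'v"

definition pointed :: "'v pset \<Rightarrow> bool" where
  "pointed A \<longleftrightarrow> snd A \<in> fst A"

text \<open>A black box X = (in(X), out(X), vset).  vset is given separately on input
  and output wires (the paper's vset lives on the disjoint union in(X) + out(X)).\<close>

record ('w, 'v) box =
  inp  :: "'w set"
  outp :: "'w set"
  vin  :: "'w \<Rightarrow> 'v pset"
  vout :: "'w \<Rightarrow> 'v pset"

text \<open>Well-formed black boxes: finite wire sets, pointed value sets; the vset data
  outside the wire sets is canonical (undefined), so that record equality is
  equality of black boxes.\<close>

definition box_wf :: "('w, 'v) box \<Rightarrow> bool" where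
  "box_wf X \<longleftrightarrow> finite (inp X) \<and> finite (outp X)
     \<and> (\<forall>w\<in>inp X. pointed (vin X w)) \<and> (\<forall>w\<in>outp X. pointed (vout X w))
     \<and> vin X \<in> extensional (inp X) \<and> vout X \<in> extensional (outp X)"

definition tup :: "'a set \<Rightarrow> ('a \<Rightarrow> 'v pset) \<Rightarrow> ('a \<Rightarrow> 'v) set" where
  "tup I V = PiE I (\<lambda>a. fst (V a))"

text \<open>Hist^1(vset_in(Z), vset_out(Z)); propagators are compared on their domain
  List(vset_in(Z)), so P(Z) is the set of functions with the required behaviour on it.\<close>

definition hist1 :: "('w, 'v) box \<Rightarrow> (('w \<Rightarrow> 'v) list \<Rightarrow> ('w \<Rightarrow> 'v) list) \<Rightarrow> bool" where
  "hist1 Z f \<longleftrightarrow> (\<forall>l\<in>lists (tup (inp Z) (vin Z)).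
      f l \<in> lists (tup (outp Z) (vout Z))
      \<and> length (f l) = length l + 1
      \<and> (l \<noteq> [] \<longrightarrow> butlast (f l) = f (butlast l)))"

text \<open>Demand ports Dem = out(Z) + in(Y) + Del and supply ports Sup = in(Z) + out(Y) + Del;
  the family Y is indexed by a finite index set of type 'i, and in(Y) = coproduct.\<close>

datatype ('w, 'i, 'd) dport = DOutZ 'w | DInY 'i 'w | DDel 'd
datatype ('w, 'i, 'd) sport = SInZ 'w | SOutY 'i 'w | SDel 'd

record ('w, 'i, 'd, 'v) wd =
  idx  :: "'i set"
  dbox :: "'i \<Rightarrow> ('w, 'v) box"
  cbox :: "('w, 'v) box"
  del  :: "'d set"
  dvs  :: "'d \<Rightarrow> 'v pset"
  sup  :: "('w, 'i, 'd) dport \<Rightarrow> ('w, 'i, 'd) sport"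

definition inDem :: "('w, 'i, 'd, 'v) wd \<Rightarrow> ('w, 'i, 'd) dport set" where
  "inDem \<psi> = {DInY i w | i w. i \<in> idx \<psi> \<and> w \<in> inp (dbox \<psi> i)} \<union> DDel ` del \<psi>"

definition demset :: "('w, 'i, 'd, 'v) wd \<Rightarrow> ('w, 'i, 'd) dport set" where
  "demset \<psi> = DOutZ ` outp (cbox \<psi>) \<union> inDem \<psi>"

definition inSup :: "('w, 'i, 'd, 'v) wd \<Rightarrow> ('w, 'i, 'd) sport set" where
  "inSup \<psi> = {SOutY i w | i w. i \<in> idx \<psi> \<and> w \<in> outp (dbox \<psi> i)} \<union> SDel ` del \<psi>"

definition supset :: "('w, 'i, 'd, 'v) wd \<Rightarrow> ('w, 'i, 'd) sport set" where
  "supset \<psi> = SInZ ` inp (cbox \<psi>) \<union> inSup \<psi>"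

fun vsetD :: "('w, 'i, 'd, 'v) wd \<Rightarrow> ('w, 'i, 'd) dport \<Rightarrow> 'v pset" where
  "vsetD \<psi> (DOutZ w) = vout (cbox \<psi>) w"
| "vsetD \<psi> (DInY i w) = vin (dbox \<psi> i) w"
| "vsetD \<psi> (DDel d) = dvs \<psi> d"

fun vsetS :: "('w, 'i, 'd, 'v) wd \<Rightarrow> ('w, 'i, 'd) sport \<Rightarrow> 'v pset" where
  "vsetS \<psi> (SInZ w) = vin (cbox \<psi>) w"
| "vsetS \<psi> (SOutY i w) = vout (dbox \<psi> i) w"
| "vsetS \<psi> (SDel d) = dvs \<psi> d"

definition wd_wf :: "('w, 'i, 'd, 'v) wd \<Rightarrow> bool" where
  "wd_wf \<psi> \<longleftrightarrow> finite (idx \<psi>) \<and> (\<forall>i\<in>idx \<psi>. box_wf (dbox \<psi> i)) \<and> box_wf (cbox \<psi>)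
     \<and> finite (del \<psi>) \<and> (\<forall>d\<in>del \<psi>. pointed (dvs \<psi> d))
     \<and> (\<forall>p\<in>demset \<psi>. sup \<psi> p \<in> supset \<psi> \<and> vsetS \<psi> (sup \<psi> p) = vsetD \<psi> p)
     \<and> (\<forall>w\<in>outp (cbox \<psi>). sup \<psi> (DOutZ w) \<in> inSup \<psi>)"

definition wd_id :: "('w, 'v) box \<Rightarrow> 'i \<Rightarrow> ('w, 'i, 'd, 'v) wd" where
  "wd_id Z i0 = \<lparr> idx = {i0}, dbox = (\<lambda>_. Z), cbox = Z, del = {}, dvs = (\<lambda>_. undefined),
     sup = (\<lambda>p. case p of DOutZ w \<Rightarrow> SOutY i0 w | DInY i w \<Rightarrow> SInZ w | DDel d \<Rightarrow> undefined) \<rparr>"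

fun liftX :: "'i \<Rightarrow> ('w, 'k, 'e) sport \<Rightarrow> ('w, 'i \<times> 'k, ('i \<times> 'e) + 'd) sport" where
  "liftX i (SOutY k w) = SOutY (i, k) w"
| "liftX i (SDel e) = SDel (Inl (i, e))"
| "liftX i (SInZ w) = undefined"

fun comp_f :: "('w, 'i, 'd, 'v) wd \<Rightarrow> ('i \<Rightarrow> ('w, 'k, 'e, 'v) wd)
    \<Rightarrow> ('w, 'i, 'd) sport \<Rightarrow> ('w, 'i \<times> 'k, ('i \<times> 'e) + 'd) sport" where
  "comp_f \<psi> \<phi> (SInZ w) = SInZ w"
| "comp_f \<psi> \<phi> (SOutY i w) = liftX i (sup (\<phi> i) (DOutZ w))"
| "comp_f \<psi> \<phi> (SDel d) = SDel (Inr d)"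

fun comp_h :: "('w, 'i, 'd, 'v) wd \<Rightarrow> ('i \<Rightarrow> ('w, 'k, 'e, 'v) wd) \<Rightarrow> 'i
    \<Rightarrow> ('w, 'k, 'e) sport \<Rightarrow> ('w, 'i \<times> 'k, ('i \<times> 'e) + 'd) sport" where
  "comp_h \<psi> \<phi> i (SInZ w) = comp_f \<psi> \<phi> (sup \<psi> (DInY i w))"
| "comp_h \<psi> \<phi> i (SOutY k w) = SOutY (i, k) w"
| "comp_h \<psi> \<phi> i (SDel e) = SDel (Inl (i, e))"

fun comp_sup :: "('w, 'i, 'd, 'v) wd \<Rightarrow> ('i \<Rightarrow> ('w, 'k, 'e, 'v) wd)
    \<Rightarrow> ('w, 'i \<times> 'k, ('i \<times> 'e) + 'd) dport \<Rightarrow> ('w, 'i \<times> 'k, ('i \<times> 'e) + 'd) sport" where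
  "comp_sup \<psi> \<phi> (DOutZ w) = comp_f \<psi> \<phi> (sup \<psi> (DOutZ w))"
| "comp_sup \<psi> \<phi> (DInY (i, k) w) = comp_h \<psi> \<phi> i (sup (\<phi> i) (DInY k w))"
| "comp_sup \<psi> \<phi> (DDel (Inl (i, e))) = comp_h \<psi> \<phi> i (sup (\<phi> i) (DDel e))"
| "comp_sup \<psi> \<phi> (DDel (Inr d)) = comp_f \<psi> \<phi> (sup \<psi> (DDel d))"

definition wd_comp :: "('w, 'i, 'd, 'v) wd \<Rightarrow> ('i \<Rightarrow> ('w, 'k, 'e, 'v) wd)
    \<Rightarrow> ('w, 'i \<times> 'k, ('i \<times> 'e) + 'd, 'v) wd" where
  "wd_comp \<psi> \<phi> = \<lparr> idx = Sigma (idx \<psi>) (\<lambda>i. idx (\<phi> i)),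
     dbox = (\<lambda>(i, k). dbox (\<phi> i) k),
     cbox = cbox \<psi>,
     del = Sigma (idx \<psi>) (\<lambda>i. del (\<phi> i)) <+> del \<psi>,
     dvs = case_sum (\<lambda>(i, e). dvs (\<phi> i) e) (dvs \<psi>),
     sup = comp_sup \<psi> \<phi> \<rparr>"

text \<open>Lists of tuples over a set of ports are lists of (extensional) functions on ports;
  a pair of equal-length lists is zipped into one list of tuples.\<close>

type_synonym ('a, 'v) propag = "('a \<Rightarrow> 'v) list \<Rightarrow> ('a \<Rightarrow> 'v) list"

definition unzipY :: "('w, 'i, 'd, 'v) wd \<Rightarrow> 'i \<Rightarrow> (('w, 'i, 'd) dport \<Rightarrow> 'v) \<Rightarrow> ('w \<Rightarrow> 'v)" where
  "unzipY \<psi> i x = (\<lambda>w. if w \<in> inp (dbox \<psi> i) then x (DInY i w) else undefined)"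

text \<open>E = g \<times> delta^1 : List(vset_inDem) \<rightarrow> List(vset_inSup), where g = prod_i g_i
  is applied componentwise and delta^1 prepends the basepoint tuple of Del.\<close>

definition Eop :: "('w, 'i, 'd, 'v) wd \<Rightarrow> ('i \<Rightarrow> ('w, 'v) propag)
    \<Rightarrow> (('w, 'i, 'd) dport \<Rightarrow> 'v) list \<Rightarrow> (('w, 'i, 'd) sport \<Rightarrow> 'v) list" where
  "Eop \<psi> g l = map (\<lambda>t. \<lambda>p. case p of
        SInZ w \<Rightarrow> undefined
      | SOutY i w \<Rightarrow> (if i \<in> idx \<psi> \<and> w \<in> outp (dbox \<psi> i)
                      then (g i (map (unzipY \<psi> i) l) ! t) w else undefined)
      | SDel d \<Rightarrow> (if d \<in> del \<psi>
                   then (if t = 0 then snd (dvs \<psi> d) else (l ! (t - 1)) (DDel d))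
                   else undefined))
    [0..<Suc (length l)]"

definition pi_s :: "('w, 'i, 'd, 'v) wd \<Rightarrow> (('w, 'i, 'd) sport \<Rightarrow> 'v) \<Rightarrow> (('w, 'i, 'd) dport \<Rightarrow> 'v)" where
  "pi_s \<psi> x = (\<lambda>p. if p \<in> demset \<psi> then x (sup \<psi> p) else undefined)"

definition Sop :: "('w, 'i, 'd, 'v) wd \<Rightarrow> (('w, 'i, 'd) sport \<Rightarrow> 'v) list \<Rightarrow> (('w, 'i, 'd) dport \<Rightarrow> 'v) list" where
  "Sop \<psi> = map (pi_s \<psi>)"

definition S'op :: "('w, 'i, 'd, 'v) wd \<Rightarrow> (('w, 'i, 'd) sport \<Rightarrow> 'v) list \<Rightarrow> (('w, 'i, 'd) dport \<Rightarrow> 'v) list" where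
  "S'op \<psi> l = map (\<lambda>x. \<lambda>p. if p \<in> inDem \<psi> then x p else undefined) (Sop \<psi> l)"

definition S''op :: "('w, 'i, 'd, 'v) wd \<Rightarrow> (('w, 'i, 'd) sport \<Rightarrow> 'v) list \<Rightarrow> ('w \<Rightarrow> 'v) list" where
  "S''op \<psi> = map (\<lambda>x. \<lambda>w. if w \<in> outp (cbox \<psi>) then x (sup \<psi> (DOutZ w)) else undefined)"

definition joinSup :: "('w, 'i, 'd, 'v) wd \<Rightarrow> ('w \<Rightarrow> 'v) list \<Rightarrow> (('w, 'i, 'd) sport \<Rightarrow> 'v) list
    \<Rightarrow> (('w, 'i, 'd) sport \<Rightarrow> 'v) list" where
  "joinSup \<psi> l m = map (\<lambda>t. \<lambda>p. case p of
        SInZ w \<Rightarrow> (if w \<in> inp (cbox \<psi>) then (l ! t) w else undefined)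
      | _ \<Rightarrow> (m ! t) p) [0..<length l]"

fun Cop :: "('w, 'i, 'd, 'v) wd \<Rightarrow> ('i \<Rightarrow> ('w, 'v) propag)
    \<Rightarrow> ('w \<Rightarrow> 'v) list \<Rightarrow> (('w, 'i, 'd) sport \<Rightarrow> 'v) list" where
  "Cop \<psi> g l = (if l = [] then []
      else joinSup \<psi> l (Eop \<psi> g (S'op \<psi> (Cop \<psi> g (butlast l)))))"

definition Pact :: "('w, 'i, 'd, 'v) wd \<Rightarrow> ('i \<Rightarrow> ('w, 'v) propag) \<Rightarrow> ('w, 'v) propag" where
  "Pact \<psi> g l = S''op \<psi> (Eop \<psi> g (S'op \<psi> (Cop \<psi> g l)))"

end

theory Submission
  imports Defs
begin


declare Cop.simps[simp del]

lemma Cop_Nil[simp]: "Cop \<psi> g [] = []"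
  by (simp add: Cop.simps)
lemma Cop_ne: "l \<noteq> [] \<Longrightarrow> Cop \<psi> g l = joinSup \<psi> l (Eop \<psi> g (S'op \<psi> (Cop \<psi> g (butlast l))))"
  by (simp add: Cop.simps)

lemma tup_iff: "x \<in> tup I V \<longleftrightarrow> (\<forall>a\<in>I. x a \<in> fst (V a)) \<and> (\<forall>a. a \<notin> I \<longrightarrow> x a = undefined)"
  by (auto simp: tup_def PiE_iff extensional_def)

lemma tupD: "x \<in> tup I V \<Longrightarrow> a \<in> I \<Longrightarrow> x a \<in> fst (V a)"
  by (simp add: tup_iff)
lemma tupU: "x \<in> tup I V \<Longrightarrow> a \<notin> I \<Longrightarrow> x a = undefined"
  by (simp add: tup_iff)

lemma inDem_simps[simp]:
  "DInY i w \<in> inDem \<psi> \<longleftrightarrow> i \<in> idx \<psi> \<and> w \<in> inp (dbox \<psi> i)"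
  "DDel d \<in> inDem \<psi> \<longleftrightarrow> d \<in> del \<psi>"
  "DOutZ w \<notin> inDem \<psi>"
  by (auto simp: inDem_def)
lemma demset_simps[simp]:
  "DInY i w \<in> demset \<psi> \<longleftrightarrow> i \<in> idx \<psi> \<and> w \<in> inp (dbox \<psi> i)"
  "DDel d \<in> demset \<psi> \<longleftrightarrow> d \<in> del \<psi>"
  "DOutZ w \<in> demset \<psi> \<longleftrightarrow> w \<in> outp (cbox \<psi>)"
  by (auto simp: demset_def inDem_def)
lemma inSup_simps[simp]:
  "SOutY i w \<in> inSup \<psi> \<longleftrightarrow> i \<in> idx \<psi> \<and> w \<in> outp (dbox \<psi> i)"
  "SDel d \<in> inSup \<psi> \<longleftrightarrow> d \<in> del \<psi>"
  "SInZ w \<notin> inSup \<psi>"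
  by (auto simp: inSup_def)
lemma supset_simps[simp]:
  "SOutY i w \<in> supset \<psi> \<longleftrightarrow> i \<in> idx \<psi> \<and> w \<in> outp (dbox \<psi> i)"
  "SDel d \<in> supset \<psi> \<longleftrightarrow> d \<in> del \<psi>"
  "SInZ w \<in> supset \<psi> \<longleftrightarrow> w \<in> inp (cbox \<psi>)"
  by (auto simp: supset_def inSup_def)

lemma inDem_demset: "p \<in> inDem \<psi> \<Longrightarrow> p \<in> demset \<psi>"
  by (simp add: demset_def)

lemma length_Eop[simp]: "length (Eop \<psi> g L) = Suc (length L)"
  by (simp add: Eop_def)
lemma length_S'op[simp]: "length (S'op \<psi> X) = length X"
  by (simp add: S'op_def Sop_def)
lemma length_S''op[simp]: "length (S''op \<psi> X) = length X"
  by (simp add: S''op_def)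
lemma length_joinSup[simp]: "length (joinSup \<psi> l m) = length l"
  by (simp add: joinSup_def)
lemma length_Cop[simp]: "length (Cop \<psi> g l) = length l"
proof (induction "length l" arbitrary: l)
  case 0 then show ?case by simp
next
  case (Suc n)
  then have "l \<noteq> []" by auto
  then show ?case by (simp add: Cop_ne)
qed

lemma Eop_SInZ[simp]: "t \<le> length L \<Longrightarrow> (Eop \<psi> g L ! t) (SInZ w) = undefined"
  by (simp add: Eop_def nth_append del: upt_Suc)
lemma Eop_SOutY[simp]: "t \<le> length L \<Longrightarrow> (Eop \<psi> g L ! t) (SOutY i w) =
   (if i \<in> idx \<psi> \<and> w \<in> outp (dbox \<psi> i) then (g i (map (unzipY \<psi> i) L) ! t) w else undefined)"
  by (simp add: Eop_def del: upt_Suc)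
lemma Eop_SDel[simp]: "t \<le> length L \<Longrightarrow> (Eop \<psi> g L ! t) (SDel d) =
   (if d \<in> del \<psi> then (if t = 0 then snd (dvs \<psi> d) else (L ! (t - 1)) (DDel d)) else undefined)"
  by (simp add: Eop_def del: upt_Suc)

lemma S'op_nth[simp]: "t < length X \<Longrightarrow> S'op \<psi> X ! t = (\<lambda>p. if p \<in> inDem \<psi> then (X ! t) (sup \<psi> p) else undefined)"
  by (auto simp: S'op_def Sop_def pi_s_def inDem_demset)
lemma S''op_nth[simp]: "t < length X \<Longrightarrow> S''op \<psi> X ! t = (\<lambda>w. if w \<in> outp (cbox \<psi>) then (X ! t) (sup \<psi> (DOutZ w)) else undefined)"
  by (simp add: S''op_def)
lemma joinSup_SInZ[simp]: "t < length l \<Longrightarrow> (joinSup \<psi> l m ! t) (SInZ w) = (if w \<in> inp (cbox \<psi>) then (l ! t) w else undefined)"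
  by (simp add: joinSup_def)
lemma joinSup_SOutY[simp]: "t < length l \<Longrightarrow> (joinSup \<psi> l m ! t) (SOutY i w) = (m ! t) (SOutY i w)"
  by (simp add: joinSup_def)
lemma joinSup_SDel[simp]: "t < length l \<Longrightarrow> (joinSup \<psi> l m ! t) (SDel d) = (m ! t) (SDel d)"
  by (simp add: joinSup_def)

lemma joinSup_cong: "(\<And>t. t < length l \<Longrightarrow> m ! t = m' ! t) \<Longrightarrow> joinSup \<psi> l m = joinSup \<psi> l m'"
  unfolding joinSup_def by (rule map_cong) (auto intro!: ext split: sport.split)

lemma joinSup_butlast: "butlast (joinSup \<psi> l m) = joinSup \<psi> (butlast l) m"
  by (rule nth_equalityI) (auto simp: nth_butlast joinSup_def intro!: ext split: sport.split)

lemma unzipY_nth_apply: "unzipY \<psi> i x w = (if w \<in> inp (dbox \<psi> i) then x (DInY i w) else undefined)"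
  by (simp add: unzipY_def)




definition wd_ok :: "('w, 'i, 'd, 'v) wd \<Rightarrow> bool" where
  "wd_ok \<psi> \<longleftrightarrow> (\<forall>p\<in>inDem \<psi>. sup \<psi> p \<in> supset \<psi> \<and> vsetS \<psi> (sup \<psi> p) = vsetD \<psi> p)
     \<and> (\<forall>d\<in>del \<psi>. pointed (dvs \<psi> d))
     \<and> (\<forall>w\<in>outp (cbox \<psi>). sup \<psi> (DOutZ w) \<in> inSup \<psi> \<and> vsetS \<psi> (sup \<psi> (DOutZ w)) = vout (cbox \<psi>) w)"

definition famok :: "('w, 'i, 'd, 'v) wd \<Rightarrow> ('i \<Rightarrow> ('w, 'v) propag) \<Rightarrow> bool" where
  "famok \<psi> g \<longleftrightarrow> (\<forall>i\<in>idx \<psi>. hist1 (dbox \<psi> i) (g i))"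

lemma wd_wf_ok: "wd_wf \<psi> \<Longrightarrow> wd_ok \<psi>"
  unfolding wd_wf_def wd_ok_def
  by (auto dest: inDem_demset)

abbreviation "TS \<psi> \<equiv> tup (supset \<psi>) (vsetS \<psi>)"
abbreviation "TID \<psi> \<equiv> tup (inDem \<psi>) (vsetD \<psi>)"
abbreviation "TIS \<psi> \<equiv> tup (inSup \<psi>) (vsetS \<psi>)"
abbreviation "TIn Z \<equiv> tup (inp Z) (vin Z)"
abbreviation "TOut Z \<equiv> tup (outp Z) (vout Z)"

lemma lists_nth: "xs \<in> lists A \<longleftrightarrow> (\<forall>t<length xs. xs ! t \<in> A)"
  by (simp add: in_lists_conv_set all_set_conv_all_nth)

lemma unzip_typ: "x \<in> TID \<psi> \<Longrightarrow> i \<in> idx \<psi> \<Longrightarrow> unzipY \<psi> i x \<in> TIn (dbox \<psi> i)"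
  unfolding tup_iff by (auto simp: unzipY_def) (metis inDem_simps(1) vsetD.simps(2))

lemma unzip_list_typ: "L \<in> lists (TID \<psi>) \<Longrightarrow> i \<in> idx \<psi> \<Longrightarrow> map (unzipY \<psi> i) L \<in> lists (TIn (dbox \<psi> i))"
  by (auto intro!: unzip_typ)

lemma hist1D: "hist1 Z f \<Longrightarrow> l \<in> lists (TIn Z) \<Longrightarrow>
   f l \<in> lists (TOut Z) \<and> length (f l) = length l + 1 \<and> (l \<noteq> [] \<longrightarrow> butlast (f l) = f (butlast l))"
  unfolding hist1_def by blast

lemma Eop_typ:
  assumes ok: "wd_ok \<psi>" and fam: "famok \<psi> g" and L: "L \<in> lists (TID \<psi>)"
  shows "Eop \<psi> g L \<in> lists (TIS \<psi>)"
  unfolding lists_nth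
proof (intro allI impI)
  fix t assume "t < length (Eop \<psi> g L)"
  then have t: "t \<le> length L" by simp
  show "Eop \<psi> g L ! t \<in> TIS \<psi>"
    unfolding tup_iff
  proof (intro conjI ballI allI impI)
    fix a assume a: "a \<in> inSup \<psi>"
    show "(Eop \<psi> g L ! t) a \<in> fst (vsetS \<psi> a)"
    proof (cases a)
      case (SInZ w) then show ?thesis using a by simp
    next
      case (SOutY i w)
      with a have i: "i \<in> idx \<psi>" and w: "w \<in> outp (dbox \<psi> i)" by auto
      have h: "hist1 (dbox \<psi> i) (g i)" using fam i by (simp add: famok_def)
      from hist1D[OF h unzip_list_typ[OF L i]]
      have "g i (map (unzipY \<psi> i) L) ! t \<in> TOut (dbox \<psi> i)"
        using t by (auto simp: lists_nth)
      then show ?thesis using SOutY i w t by (simp add: tup_iff)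
    next
      case (SDel d)
      with a have d: "d \<in> del \<psi>" by auto
      show ?thesis
      proof (cases "t = 0")
        case True then show ?thesis using ok d SDel t by (simp add: wd_ok_def pointed_def)
      next
        case False
        then have "L ! (t - 1) \<in> TID \<psi>" using L t by (auto simp: lists_nth)
        then have "(L ! (t - 1)) (DDel d) \<in> fst (vsetD \<psi> (DDel d))" using d by (intro tupD) auto
        then show ?thesis using False d SDel t by simp
      qed
    qed
  next
    fix a assume a: "a \<notin> inSup \<psi>"
    show "(Eop \<psi> g L ! t) a = undefined"
      using a t by (cases a) auto
  qed
qed

lemma S'op_typ:
  assumes ok: "wd_ok \<psi>" and X: "X \<in> lists (TS \<psi>)"
  shows "S'op \<psi> X \<in> lists (TID \<psi>)"
  unfolding lists_nth
proof (intro allI impI)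
  fix t assume "t < length (S'op \<psi> X)"
  then have t: "t < length X" by simp
  have Xt: "X ! t \<in> TS \<psi>" using X t by (auto simp: lists_nth)
  show "S'op \<psi> X ! t \<in> TID \<psi>"
    using t Xt ok unfolding tup_iff wd_ok_def by (auto) metis
qed

lemma joinSup_typ:
  assumes l: "l \<in> lists (TIn (cbox \<psi>))" and M: "M \<in> lists (TIS \<psi>)" and len: "length l \<le> length M"
  shows "joinSup \<psi> l M \<in> lists (TS \<psi>)"
  unfolding lists_nth
proof (intro allI impI)
  fix t assume "t < length (joinSup \<psi> l M)"
  then have t: "t < length l" by simp
  have lt: "l ! t \<in> TIn (cbox \<psi>)" using l t by (auto simp: lists_nth)
  have Mt: "M ! t \<in> TIS \<psi>" using M t len by (auto simp: lists_nth)
  show "joinSup \<psi> l M ! t \<in> TS \<psi>"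
    unfolding tup_iff
  proof (intro conjI ballI allI impI)
    fix a assume a: "a \<in> supset \<psi>"
    show "(joinSup \<psi> l M ! t) a \<in> fst (vsetS \<psi> a)"
      using a t tupD[OF lt] tupD[OF Mt, of a] by (cases a) auto
  next
    fix a assume a: "a \<notin> supset \<psi>"
    show "(joinSup \<psi> l M ! t) a = undefined"
      using a t tupU[OF lt] tupU[OF Mt, of a] by (cases a) auto
  qed
qed

lemma Cop_typ:
  assumes ok: "wd_ok \<psi>" and fam: "famok \<psi> g"
  shows "l \<in> lists (TIn (cbox \<psi>)) \<Longrightarrow> Cop \<psi> g l \<in> lists (TS \<psi>)"
proof (induction "length l" arbitrary: l)
  case 0 then show ?case by simp
next
  case (Suc n)
  then have ne: "l \<noteq> []" by auto
  have bl: "butlast l \<in> lists (TIn (cbox \<psi>))" using Suc.prems by (auto dest: in_set_butlastD)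
  have "Cop \<psi> g (butlast l) \<in> lists (TS \<psi>)" using Suc.hyps(1)[of "butlast l"] Suc.hyps(2) bl by simp
  then have "Eop \<psi> g (S'op \<psi> (Cop \<psi> g (butlast l))) \<in> lists (TIS \<psi>)"
    by (intro Eop_typ ok fam S'op_typ)
  then show ?case using ne Suc.prems by (simp add: Cop_ne joinSup_typ)
qed




lemma Eop_butlast:
  assumes fam: "famok \<psi> g" and L: "L \<in> lists (TID \<psi>)" and ne: "L \<noteq> []"
  shows "Eop \<psi> g (butlast L) = butlast (Eop \<psi> g L)"
proof (rule nth_equalityI)
  show "length (Eop \<psi> g (butlast L)) = length (butlast (Eop \<psi> g L))" using ne by simp
next
  fix t assume "t < length (Eop \<psi> g (butlast L))"
  then have t: "t < length L" using ne by simp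
  then have t': "t \<le> length (butlast L)" by simp
  show "Eop \<psi> g (butlast L) ! t = butlast (Eop \<psi> g L) ! t"
  proof
    fix p
    have bn: "butlast (Eop \<psi> g L) ! t = Eop \<psi> g L ! t" using t by (simp add: nth_butlast)
    show "(Eop \<psi> g (butlast L) ! t) p = (butlast (Eop \<psi> g L) ! t) p"
    proof (cases p)
      case (SInZ w) then show ?thesis using t t' bn by simp
    next
      case (SOutY i w)
      show ?thesis
      proof (cases "i \<in> idx \<psi> \<and> w \<in> outp (dbox \<psi> i)")
        case True
        have h: "hist1 (dbox \<psi> i) (g i)" using fam True by (simp add: famok_def)
        have M: "map (unzipY \<psi> i) L \<in> lists (TIn (dbox \<psi> i))" using L True by (simp add: unzip_list_typ)
        from hist1D[OF h M] ne
        have "butlast (g i (map (unzipY \<psi> i) L)) = g i (butlast (map (unzipY \<psi> i) L))"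
          and len: "length (g i (map (unzipY \<psi> i) L)) = length L + 1" by auto
        then have "g i (map (unzipY \<psi> i) (butlast L)) ! t = butlast (g i (map (unzipY \<psi> i) L)) ! t"
          by (simp add: map_butlast)
        also have "\<dots> = g i (map (unzipY \<psi> i) L) ! t"
          using t len by (simp add: nth_butlast)
        finally have "g i (map (unzipY \<psi> i) (butlast L)) ! t = g i (map (unzipY \<psi> i) L) ! t" .
        then show ?thesis using SOutY True t t' bn by simp
      next
        case False then show ?thesis using SOutY t t' bn by auto
      qed
    next
      case (SDel d) then show ?thesis using t t' bn by (simp add: nth_butlast)
    qed
  qed
qed

lemma S'op_butlast: "S'op \<psi> (butlast X) = butlast (S'op \<psi> X)"
  by (simp add: S'op_def Sop_def map_butlast)

lemma S''op_butlast: "S''op \<psi> (butlast X) = butlast (S''op \<psi> X)"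
  by (simp add: S''op_def map_butlast)

lemma Cop_butlast:
  assumes ok: "wd_ok \<psi>" and fam: "famok \<psi> g"
  shows "l \<in> lists (TIn (cbox \<psi>)) \<Longrightarrow> l \<noteq> [] \<Longrightarrow> Cop \<psi> g (butlast l) = butlast (Cop \<psi> g l)"
proof (induction "length l" arbitrary: l)
  case 0 then show ?case by simp
next
  case (Suc n)
  have bl: "butlast l \<in> lists (TIn (cbox \<psi>))" using Suc.prems by (auto dest: in_set_butlastD)
  show ?case
  proof (cases "butlast l = []")
    case True
    then show ?thesis using Suc.prems by (simp add: Cop_ne joinSup_butlast, simp add: joinSup_def)
  next
    case False
    have IH: "Cop \<psi> g (butlast (butlast l)) = butlast (Cop \<psi> g (butlast l))"
      using Suc.hyps(1)[of "butlast l"] Suc.hyps(2) bl False by simp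
    have CT: "Cop \<psi> g (butlast l) \<in> lists (TS \<psi>)" using Cop_typ[OF ok fam bl] .
    have ne2: "S'op \<psi> (Cop \<psi> g (butlast l)) \<noteq> []" using False by (metis length_Cop length_S'op length_0_conv)
    have E: "Eop \<psi> g (S'op \<psi> (Cop \<psi> g (butlast (butlast l)))) = butlast (Eop \<psi> g (S'op \<psi> (Cop \<psi> g (butlast l))))"
      unfolding IH S'op_butlast by (rule Eop_butlast[OF fam S'op_typ[OF ok CT] ne2])
    have "butlast (Cop \<psi> g l) = joinSup \<psi> (butlast l) (Eop \<psi> g (S'op \<psi> (Cop \<psi> g (butlast l))))"
      using Suc.prems by (simp add: Cop_ne joinSup_butlast)
    also have "\<dots> = joinSup \<psi> (butlast l) (Eop \<psi> g (S'op \<psi> (Cop \<psi> g (butlast (butlast l)))))"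
      unfolding E by (rule joinSup_cong) (simp add: nth_butlast)
    also have "\<dots> = Cop \<psi> g (butlast l)" using False by (simp add: Cop_ne)
    finally show ?thesis by simp
  qed
qed

lemma Cop_fp:
  assumes ok: "wd_ok \<psi>" and fam: "famok \<psi> g" and l: "l \<in> lists (TIn (cbox \<psi>))"
  shows "Cop \<psi> g l = joinSup \<psi> l (Eop \<psi> g (S'op \<psi> (Cop \<psi> g l)))"
proof (cases "l = []")
  case True then show ?thesis by (simp add: joinSup_def)
next
  case False
  have CT: "Cop \<psi> g l \<in> lists (TS \<psi>)" using Cop_typ[OF ok fam l] .
  have ne2: "S'op \<psi> (Cop \<psi> g l) \<noteq> []" using False by (metis length_Cop length_S'op length_0_conv)
  have "Cop \<psi> g l = joinSup \<psi> l (Eop \<psi> g (S'op \<psi> (Cop \<psi> g (butlast l))))" using False by (simp add: Cop_ne)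
  also have "\<dots> = joinSup \<psi> l (butlast (Eop \<psi> g (S'op \<psi> (Cop \<psi> g l))))"
    unfolding Cop_butlast[OF ok fam l False] S'op_butlast Eop_butlast[OF fam S'op_typ[OF ok CT] ne2] ..
  also have "\<dots> = joinSup \<psi> l (Eop \<psi> g (S'op \<psi> (Cop \<psi> g l)))"
    by (rule joinSup_cong) (simp add: nth_butlast)
  finally show ?thesis .
qed

lemma Cop_unique:
  assumes ok: "wd_ok \<psi>" and fam: "famok \<psi> g"
  shows "l \<in> lists (TIn (cbox \<psi>)) \<Longrightarrow> X \<in> lists (TS \<psi>) \<Longrightarrow>
    X = joinSup \<psi> l (Eop \<psi> g (S'op \<psi> X)) \<Longrightarrow> X = Cop \<psi> g l"
proof (induction "length l" arbitrary: l X)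
  case 0 then show ?case by (metis length_0_conv length_joinSup Cop_Nil)
next
  case (Suc n)
  then have ne: "l \<noteq> []" by auto
  have lenX: "length X = length l" using Suc.prems(3) by (metis length_joinSup)
  then have neX: "S'op \<psi> X \<noteq> []" using ne by (metis length_S'op length_0_conv)
  have bl: "butlast l \<in> lists (TIn (cbox \<psi>))" using Suc.prems by (auto dest: in_set_butlastD)
  have bX: "butlast X \<in> lists (TS \<psi>)" using Suc.prems by (auto dest: in_set_butlastD)
  have Eb: "Eop \<psi> g (S'op \<psi> (butlast X)) = butlast (Eop \<psi> g (S'op \<psi> X))"
    unfolding S'op_butlast by (rule Eop_butlast[OF fam S'op_typ[OF ok Suc.prems(2)] neX])
  have "butlast X = joinSup \<psi> (butlast l) (Eop \<psi> g (S'op \<psi> X))"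
    using Suc.prems(3) by (metis joinSup_butlast)
  also have "\<dots> = joinSup \<psi> (butlast l) (Eop \<psi> g (S'op \<psi> (butlast X)))"
    unfolding Eb by (rule joinSup_cong) (simp add: nth_butlast lenX)
  finally have "butlast X = Cop \<psi> g (butlast l)"
    using Suc.hyps(1)[of "butlast l" "butlast X"] Suc.hyps(2) bl bX by simp
  then have "Cop \<psi> g l = joinSup \<psi> l (Eop \<psi> g (S'op \<psi> (butlast X)))" using ne by (simp add: Cop_ne)
  also have "\<dots> = joinSup \<psi> l (Eop \<psi> g (S'op \<psi> X))"
    unfolding Eb by (rule joinSup_cong) (simp add: nth_butlast lenX)
  finally show ?case using Suc.prems(3) by simp
qed

lemma Pact_hist1:
  assumes ok: "wd_ok \<psi>" and fam: "famok \<psi> g"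
  shows "hist1 (cbox \<psi>) (Pact \<psi> g)"
  unfolding hist1_def
proof (intro ballI conjI impI)
  fix l assume l: "l \<in> lists (TIn (cbox \<psi>))"
  have CT: "Cop \<psi> g l \<in> lists (TS \<psi>)" using Cop_typ[OF ok fam l] .
  have ET: "Eop \<psi> g (S'op \<psi> (Cop \<psi> g l)) \<in> lists (TIS \<psi>)" by (rule Eop_typ[OF ok fam S'op_typ[OF ok CT]])
  show "Pact \<psi> g l \<in> lists (TOut (cbox \<psi>))"
    unfolding Pact_def lists_nth
  proof (intro allI impI)
    fix t assume "t < length (S''op \<psi> (Eop \<psi> g (S'op \<psi> (Cop \<psi> g l))))"
    then have t: "t < length (Eop \<psi> g (S'op \<psi> (Cop \<psi> g l)))" by simp
    then have Et: "Eop \<psi> g (S'op \<psi> (Cop \<psi> g l)) ! t \<in> TIS \<psi>" using ET by (simp add: lists_nth)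
    show "S''op \<psi> (Eop \<psi> g (S'op \<psi> (Cop \<psi> g l))) ! t \<in> TOut (cbox \<psi>)"
      unfolding tup_iff using t
      apply (simp only: S''op_nth)
      apply (intro conjI ballI allI impI)
      subgoal for a using ok tupD[OF Et, of "sup \<psi> (DOutZ a)"] by (simp add: wd_ok_def)
      apply simp
      done
  qed
  show "length (Pact \<psi> g l) = length l + 1" by (simp add: Pact_def)
  assume ne: "l \<noteq> []"
  have ne2: "S'op \<psi> (Cop \<psi> g l) \<noteq> []" using ne by (metis length_Cop length_S'op length_0_conv)
  show "butlast (Pact \<psi> g l) = Pact \<psi> g (butlast l)"
    unfolding Pact_def Cop_butlast[OF ok fam l ne] S'op_butlast S''op_butlast
      Eop_butlast[OF fam S'op_typ[OF ok CT] ne2] ..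
qed




lemma wd_id_fields[simp]:
  "idx (wd_id Z i0) = {i0}" "dbox (wd_id Z i0) = (\<lambda>_. Z)" "cbox (wd_id Z i0) = Z"
  "del (wd_id Z i0) = {}"
  "sup (wd_id Z i0) (DOutZ w) = SOutY i0 w" "sup (wd_id Z i0) (DInY i w) = SInZ w"
  by (simp_all add: wd_id_def)

lemma part1:
  fixes Z :: "('w, 'v) box" and i0 :: 'i and f :: "('w, 'v) propag"
  assumes h: "hist1 Z f" and l: "l \<in> lists (TIn Z)"
  shows "Pact (wd_id Z i0 :: ('w, 'i, 'd, 'v) wd) (\<lambda>_. f) l = f l"
proof -
  let ?\<psi> = "wd_id Z i0 :: ('w, 'i, 'd, 'v) wd"
  have ok: "wd_ok ?\<psi>"
    unfolding wd_ok_def inDem_def by auto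
  have fam: "famok ?\<psi> (\<lambda>_. f)" using h by (simp add: famok_def)
  let ?C = "Cop ?\<psi> (\<lambda>_. f) l"
  have l': "l \<in> lists (TIn (cbox ?\<psi>))" using l by simp
  have fp: "?C = joinSup ?\<psi> l (Eop ?\<psi> (\<lambda>_. f) (S'op ?\<psi> ?C))" by (rule Cop_fp[OF ok fam l'])
  have U: "map (unzipY ?\<psi> i0) (S'op ?\<psi> ?C) = l"
  proof (rule nth_equalityI)
    fix t assume "t < length (map (unzipY ?\<psi> i0) (S'op ?\<psi> ?C))"
    then have t: "t < length l" by simp
    have lt: "l ! t \<in> TIn Z" using l t by (simp add: lists_nth)
    have "(?C ! t) (SInZ w) = (if w \<in> inp Z then (l ! t) w else undefined)" for w
      using arg_cong[OF fp, of "\<lambda>X. (X ! t) (SInZ w)"] t by simp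
    then show "map (unzipY ?\<psi> i0) (S'op ?\<psi> ?C) ! t = l ! t"
      using t tupU[OF lt] by (auto simp: unzipY_def intro!: ext)
  qed simp
  from hist1D[OF h l] have fl: "f l \<in> lists (TOut Z)" and len: "length (f l) = length l + 1" by auto
  show ?thesis
  proof (rule nth_equalityI)
    show "length (Pact ?\<psi> (\<lambda>_. f) l) = length (f l)" using len by (simp add: Pact_def)
  next
    fix t assume "t < length (Pact ?\<psi> (\<lambda>_. f) l)"
    then have t: "t \<le> length l" by (simp add: Pact_def)
    have ft: "f l ! t \<in> TOut Z" using fl t len by (simp add: lists_nth)
    show "Pact ?\<psi> (\<lambda>_. f) l ! t = f l ! t"
      using t tupU[OF ft] unfolding Pact_def
      by (auto simp: U less_Suc_eq_le intro!: ext)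
  qed
qed




lemma wd_comp_fields[simp]:
  "idx (wd_comp \<psi> \<phi>) = Sigma (idx \<psi>) (\<lambda>i. idx (\<phi> i))"
  "dbox (wd_comp \<psi> \<phi>) (i, k) = dbox (\<phi> i) k"
  "cbox (wd_comp \<psi> \<phi>) = cbox \<psi>"
  "del (wd_comp \<psi> \<phi>) = Sigma (idx \<psi>) (\<lambda>i. del (\<phi> i)) <+> del \<psi>"
  "dvs (wd_comp \<psi> \<phi>) (Inl (i, e)) = dvs (\<phi> i) e"
  "dvs (wd_comp \<psi> \<phi>) (Inr d) = dvs \<psi> d"
  "sup (wd_comp \<psi> \<phi>) = comp_sup \<psi> \<phi>"
  by (simp_all add: wd_comp_def)

lemma Plus_simps[simp]: "Inl a \<in> A <+> B \<longleftrightarrow> a \<in> A" "Inr b \<in> A <+> B \<longleftrightarrow> b \<in> B"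
  by auto

lemma comp_inSup[simp]:
  "SOutY (i, k) w \<in> inSup (wd_comp \<psi> \<phi>) \<longleftrightarrow> i \<in> idx \<psi> \<and> k \<in> idx (\<phi> i) \<and> w \<in> outp (dbox (\<phi> i) k)"
  "SOutY (i, k) w \<in> supset (wd_comp \<psi> \<phi>) \<longleftrightarrow> i \<in> idx \<psi> \<and> k \<in> idx (\<phi> i) \<and> w \<in> outp (dbox (\<phi> i) k)"
  "DInY (i, k) w \<in> inDem (wd_comp \<psi> \<phi>) \<longleftrightarrow> i \<in> idx \<psi> \<and> k \<in> idx (\<phi> i) \<and> w \<in> inp (dbox (\<phi> i) k)"
  by (simp_all del: wd_comp_fields add: wd_comp_def)

lemma comp_vsetS[simp]:
  "vsetS (wd_comp \<psi> \<phi>) (SInZ w) = vin (cbox \<psi>) w"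
  "vsetS (wd_comp \<psi> \<phi>) (SOutY (i, k) w) = vout (dbox (\<phi> i) k) w"
  "vsetS (wd_comp \<psi> \<phi>) (SDel (Inl (i, e))) = dvs (\<phi> i) e"
  "vsetS (wd_comp \<psi> \<phi>) (SDel (Inr d)) = dvs \<psi> d"
  by simp_all

lemma comp_vsetD[simp]:
  "vsetD (wd_comp \<psi> \<phi>) (DOutZ w) = vout (cbox \<psi>) w"
  "vsetD (wd_comp \<psi> \<phi>) (DInY (i, k) w) = vin (dbox (\<phi> i) k) w"
  "vsetD (wd_comp \<psi> \<phi>) (DDel (Inl (i, e))) = dvs (\<phi> i) e"
  "vsetD (wd_comp \<psi> \<phi>) (DDel (Inr d)) = dvs \<psi> d"
  by simp_all

context
  fixes \<psi> :: "('w, 'i, 'd, 'v) wd" and \<phi> :: "'i \<Rightarrow> ('w, 'k, 'e, 'v) wd"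
  assumes okpsi: "wd_ok \<psi>"
    and okphi: "\<And>i. i \<in> idx \<psi> \<Longrightarrow> wd_ok (\<phi> i)"
    and cb: "\<And>i. i \<in> idx \<psi> \<Longrightarrow> cbox (\<phi> i) = dbox \<psi> i"
begin

lemma okpsiD:
  "p \<in> inDem \<psi> \<Longrightarrow> sup \<psi> p \<in> supset \<psi>"
  "p \<in> inDem \<psi> \<Longrightarrow> vsetS \<psi> (sup \<psi> p) = vsetD \<psi> p"
  "w \<in> outp (cbox \<psi>) \<Longrightarrow> sup \<psi> (DOutZ w) \<in> inSup \<psi>"
  "w \<in> outp (cbox \<psi>) \<Longrightarrow> vsetS \<psi> (sup \<psi> (DOutZ w)) = vout (cbox \<psi>) w"
  "d \<in> del \<psi> \<Longrightarrow> pointed (dvs \<psi> d)"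
  using okpsi by (auto simp: wd_ok_def)

lemma okphiD:
  assumes "i \<in> idx \<psi>"
  shows
  "p \<in> inDem (\<phi> i) \<Longrightarrow> sup (\<phi> i) p \<in> supset (\<phi> i)"
  "p \<in> inDem (\<phi> i) \<Longrightarrow> vsetS (\<phi> i) (sup (\<phi> i) p) = vsetD (\<phi> i) p"
  "w \<in> outp (cbox (\<phi> i)) \<Longrightarrow> sup (\<phi> i) (DOutZ w) \<in> inSup (\<phi> i)"
  "w \<in> outp (cbox (\<phi> i)) \<Longrightarrow> vsetS (\<phi> i) (sup (\<phi> i) (DOutZ w)) = vout (cbox (\<phi> i)) w"
  "d \<in> del (\<phi> i) \<Longrightarrow> pointed (dvs (\<phi> i) d)"
  using okphi[OF assms] by (auto simp: wd_ok_def)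

lemma lift_typ:
  assumes i: "i \<in> idx \<psi>" and q: "q \<in> inSup (\<phi> i)"
  shows "(liftX i q :: ('w, 'i \<times> 'k, ('i \<times> 'e) + 'd) sport) \<in> inSup (wd_comp \<psi> \<phi>)
     \<and> vsetS (wd_comp \<psi> \<phi>) (liftX i q) = vsetS (\<phi> i) q"
  using i q by (cases q) auto

lemma F_typ:
  assumes r: "r \<in> supset \<psi>"
  shows "comp_f \<psi> \<phi> r \<in> supset (wd_comp \<psi> \<phi>) \<and> vsetS (wd_comp \<psi> \<phi>) (comp_f \<psi> \<phi> r) = vsetS \<psi> r
     \<and> (r \<in> inSup \<psi> \<longrightarrow> comp_f \<psi> \<phi> r \<in> inSup (wd_comp \<psi> \<phi>))"
proof (cases r)
  case (SInZ w) then show ?thesis using r by simp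
next
  case (SOutY i w)
  with r have i: "i \<in> idx \<psi>" and w: "w \<in> outp (cbox (\<phi> i))" using cb by auto
  have q: "sup (\<phi> i) (DOutZ w) \<in> inSup (\<phi> i)" "vsetS (\<phi> i) (sup (\<phi> i) (DOutZ w)) = vout (dbox \<psi> i) w"
    using okphiD(3,4)[OF i w] cb[OF i] by auto
  show ?thesis using lift_typ[OF i q(1)] q(2) SOutY by (auto simp: supset_def)
next
  case (SDel d) then show ?thesis using r by simp
qed

lemma H_typ:
  assumes i: "i \<in> idx \<psi>" and q: "q \<in> supset (\<phi> i)"
  shows "comp_h \<psi> \<phi> i q \<in> supset (wd_comp \<psi> \<phi>) \<and> vsetS (wd_comp \<psi> \<phi>) (comp_h \<psi> \<phi> i q) = vsetS (\<phi> i) q"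
proof (cases q)
  case (SInZ w)
  with q have w: "w \<in> inp (dbox \<psi> i)" using cb[OF i] by simp
  have "DInY i w \<in> inDem \<psi>" using i w by simp
  then have r: "sup \<psi> (DInY i w) \<in> supset \<psi>" "vsetS \<psi> (sup \<psi> (DInY i w)) = vin (dbox \<psi> i) w"
    using okpsiD(1,2) by auto
  show ?thesis using F_typ[OF r(1)] r(2) SInZ cb[OF i] by simp
next
  case (SOutY k w) then show ?thesis using q i by simp
next
  case (SDel e) then show ?thesis using q i by simp
qed

lemma comp_ok_dem:
  assumes p: "p \<in> inDem (wd_comp \<psi> \<phi>)"
  shows "sup (wd_comp \<psi> \<phi>) p \<in> supset (wd_comp \<psi> \<phi>) \<and>
        vsetS (wd_comp \<psi> \<phi>) (sup (wd_comp \<psi> \<phi>) p) = vsetD (wd_comp \<psi> \<phi>) p"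
  proof (cases p)
    case (DOutZ w) then show ?thesis using p by simp
  next
    case (DInY ik w)
    obtain i k where ik: "ik = (i, k)" by force
    with p DInY have i: "i \<in> idx \<psi>" and k: "k \<in> idx (\<phi> i)" and w: "w \<in> inp (dbox (\<phi> i) k)" by auto
    have "DInY k w \<in> inDem (\<phi> i)" using k w by simp
    then show ?thesis using H_typ[OF i okphiD(1)[OF i]] okphiD(2)[OF i] DInY ik by auto
  next
    case (DDel x)
    show ?thesis
    proof (cases x)
      case (Inl ie)
      obtain i e where ie: "ie = (i, e)" by force
      with p DDel Inl have i: "i \<in> idx \<psi>" and e: "e \<in> del (\<phi> i)" by auto
      have "DDel e \<in> inDem (\<phi> i)" using e by simp
      then show ?thesis using H_typ[OF i okphiD(1)[OF i]] okphiD(2)[OF i] DDel Inl ie by auto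
    next
      case (Inr d)
      with p DDel have d: "d \<in> del \<psi>" by auto
      have "DDel d \<in> inDem \<psi>" using d by simp
      then show ?thesis using F_typ[OF okpsiD(1)] okpsiD(2) DDel Inr by auto
    qed
  qed

lemma inSup_supset: "x \<in> inSup \<psi>' \<Longrightarrow> x \<in> supset \<psi>'"
  by (simp add: supset_def)

lemma comp_ok: "wd_ok (wd_comp \<psi> \<phi>)"
  unfolding wd_ok_def
proof (intro conjI)
  show "\<forall>p\<in>inDem (wd_comp \<psi> \<phi>). sup (wd_comp \<psi> \<phi>) p \<in> supset (wd_comp \<psi> \<phi>) \<and>
        vsetS (wd_comp \<psi> \<phi>) (sup (wd_comp \<psi> \<phi>) p) = vsetD (wd_comp \<psi> \<phi>) p"
    using comp_ok_dem by blast
  show "\<forall>x\<in>del (wd_comp \<psi> \<phi>). pointed (dvs (wd_comp \<psi> \<phi>) x)"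
    using okpsiD(5) okphiD(5) by auto
  show "\<forall>w\<in>outp (cbox (wd_comp \<psi> \<phi>)). sup (wd_comp \<psi> \<phi>) (DOutZ w) \<in> inSup (wd_comp \<psi> \<phi>) \<and>
        vsetS (wd_comp \<psi> \<phi>) (sup (wd_comp \<psi> \<phi>) (DOutZ w)) = vout (cbox (wd_comp \<psi> \<phi>)) w"
  proof
    fix w assume w: "w \<in> outp (cbox (wd_comp \<psi> \<phi>))"
    then have w': "w \<in> outp (cbox \<psi>)" by simp
    show "sup (wd_comp \<psi> \<phi>) (DOutZ w) \<in> inSup (wd_comp \<psi> \<phi>) \<and>
        vsetS (wd_comp \<psi> \<phi>) (sup (wd_comp \<psi> \<phi>) (DOutZ w)) = vout (cbox (wd_comp \<psi> \<phi>)) w"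
      using F_typ[OF inSup_supset[OF okpsiD(3)[OF w']]] okpsiD(3,4)[OF w'] by simp
  qed
qed

end



definition Gf :: "('i \<Rightarrow> ('w, 'k, 'e, 'v) wd) \<Rightarrow> ('i \<times> 'k \<Rightarrow> ('w, 'v) propag) \<Rightarrow> 'i \<Rightarrow> ('w, 'v) propag" where
  "Gf \<phi> f i = Pact (\<phi> i) (\<lambda>k. f (i, k))"

definition Jl :: "('w, 'i, 'd, 'v) wd \<Rightarrow> ('i \<Rightarrow> ((('w, 'k, 'e) sport) \<Rightarrow> 'v) list)
   \<Rightarrow> ((('w, 'i, 'd) sport) \<Rightarrow> 'v) list \<Rightarrow> ((('w, 'i \<times> 'k, ('i \<times> 'e) + 'd) sport) \<Rightarrow> 'v) list" where
  "Jl \<psi> CP CS = map (\<lambda>t. \<lambda>p. case p of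
       SInZ w \<Rightarrow> (CS ! t) (SInZ w)
     | SOutY ik w \<Rightarrow> (if fst ik \<in> idx \<psi> then (CP (fst ik) ! t) (SOutY (snd ik) w) else undefined)
     | SDel x \<Rightarrow> (case x of Inl ie \<Rightarrow> (if fst ie \<in> idx \<psi> then (CP (fst ie) ! t) (SDel (snd ie)) else undefined)
                 | Inr d \<Rightarrow> (CS ! t) (SDel d))) [0..<length CS]"

lemma length_Jl[simp]: "length (Jl \<psi> CP CS) = length CS" by (simp add: Jl_def)
lemma Jl_simps[simp]:
  assumes "t < length CS"
  shows "(Jl \<psi> CP CS ! t) (SInZ w) = (CS ! t) (SInZ w)"
    "(Jl \<psi> CP CS ! t) (SOutY (i, k) w) = (if i \<in> idx \<psi> then (CP i ! t) (SOutY k w) else undefined)"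
    "(Jl \<psi> CP CS ! t) (SDel (Inl (i, e))) = (if i \<in> idx \<psi> then (CP i ! t) (SDel e) else undefined)"
    "(Jl \<psi> CP CS ! t) (SDel (Inr d)) = (CS ! t) (SDel d)"
  using assms by (simp_all add: Jl_def)

context
  fixes \<psi> :: "('w, 'i, 'd, 'v) wd" and \<phi> :: "'i \<Rightarrow> ('w, 'k, 'e, 'v) wd"
    and f :: "'i \<times> 'k \<Rightarrow> ('w, 'v) propag" and l :: "('w \<Rightarrow> 'v) list"
  assumes okpsi: "wd_ok \<psi>"
    and okphi: "\<And>i. i \<in> idx \<psi> \<Longrightarrow> wd_ok (\<phi> i)"
    and cb: "\<And>i. i \<in> idx \<psi> \<Longrightarrow> cbox (\<phi> i) = dbox \<psi> i"
    and hf: "\<And>i k. i \<in> idx \<psi> \<Longrightarrow> k \<in> idx (\<phi> i) \<Longrightarrow> hist1 (dbox (\<phi> i) k) (f (i, k))"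
    and l: "l \<in> lists (TIn (cbox \<psi>))"
begin

abbreviation "CS \<equiv> Cop \<psi> (Gf \<phi> f) l"
abbreviation "II i \<equiv> map (unzipY \<psi> i) (S'op \<psi> CS)"
abbreviation "CP i \<equiv> Cop (\<phi> i) (\<lambda>k. f (i, k)) (II i)"
abbreviation "JJ \<equiv> Jl \<psi> CP CS"
abbreviation "\<omega> \<equiv> wd_comp \<psi> \<phi>"
abbreviation "EW \<equiv> Eop \<omega> f (S'op \<omega> JJ)"
abbreviation "ES \<equiv> Eop \<psi> (Gf \<phi> f) (S'op \<psi> CS)"
abbreviation "EP i \<equiv> Eop (\<phi> i) (\<lambda>k. f (i, k)) (S'op (\<phi> i) (CP i))"

lemma famphi: "i \<in> idx \<psi> \<Longrightarrow> famok (\<phi> i) (\<lambda>k. f (i, k))"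
  using hf by (simp add: famok_def)

lemma fampsi: "famok \<psi> (Gf \<phi> f)"
  unfolding famok_def Gf_def
  using Pact_hist1[OF okphi famphi] cb by fastforce

lemma famomega: "famok \<omega> f"
  using hf by (auto simp: famok_def)

lemma CS_typ: "CS \<in> lists (TS \<psi>)"
  by (rule Cop_typ[OF okpsi fampsi l])

lemma II_typ: "i \<in> idx \<psi> \<Longrightarrow> II i \<in> lists (TIn (cbox (\<phi> i)))"
  using unzip_list_typ[OF S'op_typ[OF okpsi CS_typ]] cb by simp

lemma CP_typ: "i \<in> idx \<psi> \<Longrightarrow> CP i \<in> lists (TS (\<phi> i))"
  by (rule Cop_typ[OF okphi famphi II_typ])

lemma len_CS[simp]: "length CS = length l" by simp
lemma len_CP[simp]: "length (CP i) = length l" by simp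

lemma FPS:
  assumes t: "t < length l"
  shows "(CS ! t) (SInZ w) = (if w \<in> inp (cbox \<psi>) then (l ! t) w else undefined)"
    "(CS ! t) (SOutY i w) = (ES ! t) (SOutY i w)"
    "(CS ! t) (SDel d) = (ES ! t) (SDel d)"
  using arg_cong[OF Cop_fp[OF okpsi fampsi l], of "\<lambda>X. (X ! t) (SInZ w)"]
    arg_cong[OF Cop_fp[OF okpsi fampsi l], of "\<lambda>X. (X ! t) (SOutY i w)"]
    arg_cong[OF Cop_fp[OF okpsi fampsi l], of "\<lambda>X. (X ! t) (SDel d)"] t by simp_all

lemma FPP:
  assumes i: "i \<in> idx \<psi>" and t: "t < length l"
  shows "(CP i ! t) (SInZ w) = (if w \<in> inp (cbox (\<phi> i)) then (II i ! t) w else undefined)"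
    "(CP i ! t) (SOutY k w) = (EP i ! t) (SOutY k w)"
    "(CP i ! t) (SDel e) = (EP i ! t) (SDel e)"
  using arg_cong[OF Cop_fp[OF okphi[OF i] famphi[OF i] II_typ[OF i]], of "\<lambda>X. (X ! t) (SInZ w)"]
    arg_cong[OF Cop_fp[OF okphi[OF i] famphi[OF i] II_typ[OF i]], of "\<lambda>X. (X ! t) (SOutY k w)"]
    arg_cong[OF Cop_fp[OF okphi[OF i] famphi[OF i] II_typ[OF i]], of "\<lambda>X. (X ! t) (SDel e)"] t
  by simp_all

lemma Gval:
  assumes i: "i \<in> idx \<psi>" and w: "w \<in> outp (dbox \<psi> i)" and t: "t \<le> length l"
  shows "(ES ! t) (SOutY i w) = (EP i ! t) (sup (\<phi> i) (DOutZ w))"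
  using i w t cb[OF i] by (simp add: Gf_def Pact_def less_Suc_eq_le)


lemma L2:
  assumes t: "t < length l" and r: "r \<in> supset \<psi>"
  shows "(JJ ! t) (comp_f \<psi> \<phi> r) = (CS ! t) r"
proof (cases r)
  case (SInZ w) then show ?thesis using t by simp
next
  case (SOutY i w)
  with r have i: "i \<in> idx \<psi>" and w: "w \<in> outp (dbox \<psi> i)" by auto
  have q: "sup (\<phi> i) (DOutZ w) \<in> inSup (\<phi> i)" using okphiD(3)[OF okpsi okphi cb i] w cb[OF i] by simp
  have "(JJ ! t) (comp_f \<psi> \<phi> r) = (EP i ! t) (sup (\<phi> i) (DOutZ w))"
    using q SOutY t i FPP[OF i t] by (cases "sup (\<phi> i) (DOutZ w)") auto
  also have "\<dots> = (CS ! t) r" using Gval[OF i w] t FPS[OF t] SOutY by simp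
  finally show ?thesis .
next
  case (SDel d) then show ?thesis using t by simp
qed

lemma L1:
  assumes t: "t < length l" and i: "i \<in> idx \<psi>" and q: "q \<in> supset (\<phi> i)"
  shows "(JJ ! t) (comp_h \<psi> \<phi> i q) = (CP i ! t) q"
proof (cases q)
  case (SInZ w)
  with q have w: "w \<in> inp (dbox \<psi> i)" using cb[OF i] by simp
  have "DInY i w \<in> inDem \<psi>" using i w by simp
  then have r: "sup \<psi> (DInY i w) \<in> supset \<psi>" using okpsiD(1)[OF okpsi okphi cb] by blast
  show ?thesis using L2[OF t r] SInZ FPP[OF i t] t i w cb[OF i] by (simp add: unzipY_def)
next
  case (SOutY k w) then show ?thesis using t i by simp
next
  case (SDel e) then show ?thesis using t i by simp
qed

lemma MU:
  assumes i: "i \<in> idx \<psi>" and k: "k \<in> idx (\<phi> i)"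
  shows "map (unzipY \<omega> (i, k)) (S'op \<omega> JJ) = map (unzipY (\<phi> i) k) (S'op (\<phi> i) (CP i))"
proof (rule nth_equalityI)
  fix t assume "t < length (map (unzipY \<omega> (i, k)) (S'op \<omega> JJ))"
  then have t: "t < length l" by simp
  show "map (unzipY \<omega> (i, k)) (S'op \<omega> JJ) ! t = map (unzipY (\<phi> i) k) (S'op (\<phi> i) (CP i)) ! t"
  proof
    fix w
    show "(map (unzipY \<omega> (i, k)) (S'op \<omega> JJ) ! t) w = (map (unzipY (\<phi> i) k) (S'op (\<phi> i) (CP i)) ! t) w"
    proof (cases "w \<in> inp (dbox (\<phi> i) k)")
      case True
      have "DInY k w \<in> inDem (\<phi> i)" using True k by simp
      then have q: "sup (\<phi> i) (DInY k w) \<in> supset (\<phi> i)" using okphiD(1)[OF okpsi okphi cb i] by blast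
      show ?thesis using L1[OF t i q] True i k t by (simp add: unzipY_def)
    next
      case False then show ?thesis using t by (simp add: unzipY_def)
    qed
  qed
qed simp

lemma E1:
  assumes t: "t \<le> length l" and i: "i \<in> idx \<psi>"
  shows "(EW ! t) (SOutY (i, k) w) = (EP i ! t) (SOutY k w)"
    "(EW ! t) (SDel (Inl (i, e))) = (EP i ! t) (SDel e)"
proof -
  show "(EW ! t) (SOutY (i, k) w) = (EP i ! t) (SOutY k w)"
  proof (cases "k \<in> idx (\<phi> i)")
    case True then show ?thesis using MU[OF i True] t i by simp
  next
    case False then show ?thesis using t i by simp
  qed
  show "(EW ! t) (SDel (Inl (i, e))) = (EP i ! t) (SDel e)"
  proof (cases "e \<in> del (\<phi> i) \<and> t \<noteq> 0")
    case True
    then have t1: "t - 1 < length l" using t by auto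
    have "DDel e \<in> inDem (\<phi> i)" using True by simp
    then have q: "sup (\<phi> i) (DDel e) \<in> supset (\<phi> i)" using okphiD(1)[OF okpsi okphi cb i] by blast
    show ?thesis using L1[OF t1 i q] True t i t1 by simp
  next
    case False then show ?thesis using t i by auto
  qed
qed

lemma E2:
  assumes t: "t \<le> length l"
  shows "(EW ! t) (SDel (Inr d)) = (ES ! t) (SDel d)"
    "i \<in> idx \<psi> \<Longrightarrow> w \<in> outp (dbox \<psi> i) \<Longrightarrow> (EW ! t) (comp_f \<psi> \<phi> (SOutY i w)) = (ES ! t) (SOutY i w)"
proof -
  show "(EW ! t) (SDel (Inr d)) = (ES ! t) (SDel d)"
  proof (cases "d \<in> del \<psi> \<and> t \<noteq> 0")
    case True
    then have t1: "t - 1 < length l" using t by auto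
    have "DDel d \<in> inDem \<psi>" using True by simp
    then have r: "sup \<psi> (DDel d) \<in> supset \<psi>" using okpsiD(1)[OF okpsi okphi cb] by blast
    show ?thesis using L2[OF t1 r] True t t1 by simp
  next
    case False then show ?thesis using t by auto
  qed
  assume i: "i \<in> idx \<psi>" and w: "w \<in> outp (dbox \<psi> i)"
  have q: "sup (\<phi> i) (DOutZ w) \<in> inSup (\<phi> i)" using okphiD(3)[OF okpsi okphi cb i] w cb[OF i] by simp
  have "(EW ! t) (comp_f \<psi> \<phi> (SOutY i w)) = (EP i ! t) (sup (\<phi> i) (DOutZ w))"
    using q E1[OF t i] by (cases "sup (\<phi> i) (DOutZ w)") auto
  also have "\<dots> = (ES ! t) (SOutY i w)" using Gval[OF i w t] by simp
  finally show "(EW ! t) (comp_f \<psi> \<phi> (SOutY i w)) = (ES ! t) (SOutY i w)" .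
qed


lemma JJ_fp: "JJ = joinSup \<omega> l EW"
proof (rule nth_equalityI)
  fix t assume "t < length JJ"
  then have t: "t < length l" by simp
  then have t': "t \<le> length l" by simp
  show "JJ ! t = joinSup \<omega> l EW ! t"
  proof
    fix p show "(JJ ! t) p = (joinSup \<omega> l EW ! t) p"
    proof (cases p)
      case (SInZ w) then show ?thesis using t FPS[OF t] by simp
    next
      case (SOutY ik w)
      obtain i k where ik: "ik = (i, k)" by force
      show ?thesis
      proof (cases "i \<in> idx \<psi>")
        case True then show ?thesis using SOutY ik t E1[OF t' True] FPP[OF True t] by simp
      next
        case False then show ?thesis using SOutY ik t t' by simp
      qed
    next
      case (SDel x)
      show ?thesis
      proof (cases x)
        case (Inl ie)
        obtain i e where ie: "ie = (i, e)" by force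
        show ?thesis
        proof (cases "i \<in> idx \<psi>")
          case True then show ?thesis using SDel Inl ie t E1[OF t' True] FPP[OF True t] by simp
        next
          case False then show ?thesis using SDel Inl ie t t' by simp
        qed
      next
        case (Inr d) then show ?thesis using SDel t E2[OF t'] FPS[OF t] by simp
      qed
    qed
  qed
qed simp

lemma JJ_typ: "JJ \<in> lists (TS \<omega>)"
  unfolding lists_nth
proof (intro allI impI)
  fix t assume "t < length JJ"
  then have t: "t < length l" by simp
  have CSt: "CS ! t \<in> TS \<psi>" using CS_typ t by (simp add: lists_nth)
  have CPt: "i \<in> idx \<psi> \<Longrightarrow> CP i ! t \<in> TS (\<phi> i)" for i using CP_typ t by (simp add: lists_nth)
  show "JJ ! t \<in> TS \<omega>"
    unfolding tup_iff
  proof (intro conjI ballI allI impI)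
    fix p assume p: "p \<in> supset \<omega>"
    show "(JJ ! t) p \<in> fst (vsetS \<omega> p)"
    proof (cases p)
      case (SInZ w) then show ?thesis using p t tupD[OF CSt, of "SInZ w"] by simp
    next
      case (SOutY ik w)
      obtain i k where ik: "ik = (i, k)" by force
      then show ?thesis using p t SOutY tupD[OF CPt, of i "SOutY k w"] by auto
    next
      case (SDel x)
      then show ?thesis
      proof (cases x)
        case (Inl ie)
        obtain i e where ie: "ie = (i, e)" by force
        then show ?thesis using p t SDel Inl tupD[OF CPt, of i "SDel e"] by auto
      next
        case (Inr d) then show ?thesis using p t SDel tupD[OF CSt, of "SDel d"] by auto
      qed
    qed
  next
    fix p assume p: "p \<notin> supset \<omega>"
    show "(JJ ! t) p = undefined"
    proof (cases p)
      case (SInZ w) then show ?thesis using p t tupU[OF CSt, of "SInZ w"] by simp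
    next
      case (SOutY ik w)
      obtain i k where ik: "ik = (i, k)" by force
      then show ?thesis using p t SOutY tupU[OF CPt, of i "SOutY k w"] by auto
    next
      case (SDel x)
      then show ?thesis
      proof (cases x)
        case (Inl ie)
        obtain i e where ie: "ie = (i, e)" by force
        then show ?thesis using p t SDel Inl tupU[OF CPt, of i "SDel e"] by auto
      next
        case (Inr d) then show ?thesis using p t SDel tupU[OF CSt, of "SDel d"] by auto
      qed
    qed
  qed
qed

lemma Cop_omega: "Cop \<omega> f l = JJ"
  using Cop_unique[OF comp_ok[OF okpsi okphi cb] famomega _ JJ_typ JJ_fp] l by simp

lemma comp_main: "Pact \<omega> f l = Pact \<psi> (Gf \<phi> f) l"
proof (rule nth_equalityI)
  show "length (Pact \<omega> f l) = length (Pact \<psi> (Gf \<phi> f) l)" by (simp add: Pact_def)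
next
  fix t assume "t < length (Pact \<omega> f l)"
  then have t: "t \<le> length l" by (simp add: Pact_def)
  show "Pact \<omega> f l ! t = Pact \<psi> (Gf \<phi> f) l ! t"
  proof
    fix w
    show "(Pact \<omega> f l ! t) w = (Pact \<psi> (Gf \<phi> f) l ! t) w"
    proof (cases "w \<in> outp (cbox \<psi>)")
      case True
      have r: "sup \<psi> (DOutZ w) \<in> inSup \<psi>" using okpsiD(3)[OF okpsi okphi cb True] .
      have "(EW ! t) (comp_f \<psi> \<phi> (sup \<psi> (DOutZ w))) = (ES ! t) (sup \<psi> (DOutZ w))"
      proof (cases "sup \<psi> (DOutZ w)")
        case (SInZ x) then show ?thesis using r by simp
      next
        case (SOutY i x) then show ?thesis using r E2(2)[OF t, of i x] by simp
      next
        case (SDel d) then show ?thesis using E2(1)[OF t] by simp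
      qed
      then show ?thesis using True t unfolding Pact_def Cop_omega by (simp add: less_Suc_eq_le)
    next
      case False then show ?thesis using t unfolding Pact_def by (simp add: less_Suc_eq_le)
    qed
  qed
qed

end


theorem theorem3p14:
  shows "(\<forall>(Z :: ('w, 'v) box) (i0 :: 'i) (f :: ('w, 'v) propag).
            box_wf Z \<and> hist1 Z f \<longrightarrow>
            (\<forall>l \<in> lists (tup (inp Z) (vin Z)).
               Pact (wd_id Z i0 :: ('w, 'i, 'd, 'v) wd) (\<lambda>_. f) l = f l))
       \<and> (\<forall>(\<psi> :: ('w, 'i, 'd, 'v) wd) (\<phi> :: 'i \<Rightarrow> ('w, 'k, 'e, 'v) wd)
            (f :: 'i \<times> 'k \<Rightarrow> ('w, 'v) propag).
            wd_wf \<psi>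
            \<and> (\<forall>i \<in> idx \<psi>. wd_wf (\<phi> i) \<and> cbox (\<phi> i) = dbox \<psi> i)
            \<and> (\<forall>i \<in> idx \<psi>. \<forall>k \<in> idx (\<phi> i). hist1 (dbox (\<phi> i) k) (f (i, k)))
            \<longrightarrow>
            (\<forall>l \<in> lists (tup (inp (cbox \<psi>)) (vin (cbox \<psi>))).
               Pact (wd_comp \<psi> \<phi>) f l = Pact \<psi> (\<lambda>i. Pact (\<phi> i) (\<lambda>k. f (i, k))) l))"
proof (intro conjI allI impI ballI)
  fix Z :: "('w, 'v) box" and i0 :: 'i and f :: "('w, 'v) propag" and l
  assume "box_wf Z \<and> hist1 Z f" and "l \<in> lists (tup (inp Z) (vin Z))"
  then show "Pact (wd_id Z i0 :: ('w, 'i, 'd, 'v) wd) (\<lambda>_. f) l = f l"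
    by (intro part1) auto
next
  fix \<psi> :: "('w, 'i, 'd, 'v) wd" and \<phi> :: "'i \<Rightarrow> ('w, 'k, 'e, 'v) wd"
    and f :: "'i \<times> 'k \<Rightarrow> ('w, 'v) propag" and l
  assume H: "wd_wf \<psi>
            \<and> (\<forall>i \<in> idx \<psi>. wd_wf (\<phi> i) \<and> cbox (\<phi> i) = dbox \<psi> i)
            \<and> (\<forall>i \<in> idx \<psi>. \<forall>k \<in> idx (\<phi> i). hist1 (dbox (\<phi> i) k) (f (i, k)))"
    and l: "l \<in> lists (tup (inp (cbox \<psi>)) (vin (cbox \<psi>)))"
  have G: "Gf \<phi> f = (\<lambda>i. Pact (\<phi> i) (\<lambda>k. f (i, k)))" by (rule ext) (simp add: Gf_def)
  have "Pact (wd_comp \<psi> \<phi>) f l = Pact \<psi> (Gf \<phi> f) l"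
    proof (rule comp_main)
    show "wd_ok \<psi>" using H by (simp add: wd_wf_ok)
    show "\<And>i. i \<in> idx \<psi> \<Longrightarrow> wd_ok (\<phi> i)" using H by (simp add: wd_wf_ok)
    show "\<And>i. i \<in> idx \<psi> \<Longrightarrow> cbox (\<phi> i) = dbox \<psi> i" using H by simp
    show "\<And>i k. i \<in> idx \<psi> \<Longrightarrow> k \<in> idx (\<phi> i) \<Longrightarrow> hist1 (dbox (\<phi> i) k) (f (i, k))" using H by simp
    show "l \<in> lists (TIn (cbox \<psi>))" using l .
  qed
  then show "Pact (wd_comp \<psi> \<phi>) f l = Pact \<psi> (\<lambda>i. Pact (\<phi> i) (\<lambda>k. f (i, k))) l"
    unfolding G .
qed

end
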